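(* Let $(G,d)$ be a boundedly compact $p$-uniformly convex metric space with $p\in(1,\infty)$ and $c>0$, $f:G\to\mathbb{R}$ proper, lower semicontinuous and convex, and $\lambda>0$. Then $x_+=\mathrm{prox}^p_{f,\lambda}(x)$ if and only if $$\frac{4}{cp\lambda^{p-1}}\Delta^{(p,c)}(x_+,x,x_+,y)-\frac{2-c}{2p\lambda^{p-1}}d(x_+,y)^p\le f(y)-f(x_+)\qquad\forall y\in G.$$
   Context: $(G,d)$ is uniquely geodesic; $(1-\tau)x\oplus\tau y$ is the point on the geodesic from $x$ to $y$ at distance $\tau d(x,y)$ from $x$. $p$-uniform convexity with constant $c$: $d(z,(1-\tau)x\oplus\tau y)^p\le(1-\tau)d(z,x)^p+\tau d(z,y)^p-\frac c2\tau(1-\tau)d(x,y)^p$. $f$ convex: $f((1-\tau)x\oplus\tau y)\le(1-\tau)f(x)+\tau f(y)$. $\mathrm{prox}^p_{f,\lambda}(x)=\operatorname{argmin}_{y\in G}\{f(y)+\frac1{p\lambda^{p-1}}d(y,x)^p\}$. $\Delta^{(p,c)}(x,y,u,v)=\frac c4\big(d(x,v)^p+d(y,u)^p-d(x,u)^p-d(y,v)^p\big)$. *)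

theory Defs
  imports "HOL-Analysis.Analysis"
begin

text \<open>The metric space (G,d) is the whole of a type of class metric_space, d = dist.\<close>

definition boundedly_compact :: "'a::metric_space itself \<Rightarrow> bool" where
  "boundedly_compact _ \<longleftrightarrow> (\<forall>S::'a set. bounded S \<and> closed S \<longrightarrow> compact S)"

definition is_geodesic :: "(real \<Rightarrow> 'a::metric_space) \<Rightarrow> 'a \<Rightarrow> 'a \<Rightarrow> bool" where
  "is_geodesic \<gamma> x y \<longleftrightarrow> \<gamma> 0 = x \<and> \<gamma> 1 = y \<and>
     (\<forall>s\<in>{0..1}. \<forall>t\<in>{0..1}. dist (\<gamma> s) (\<gamma> t) = \<bar>s - t\<bar> * dist x y)"

definition uniquely_geodesic :: "'a::metric_space itself \<Rightarrow> bool" where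
  "uniquely_geodesic _ \<longleftrightarrow> (\<forall>x y::'a. \<exists>\<gamma>. is_geodesic \<gamma> x y \<and>
      (\<forall>\<gamma>'. is_geodesic \<gamma>' x y \<longrightarrow> (\<forall>t\<in>{0..1}. \<gamma>' t = \<gamma> t)))"

text \<open>geo x y \<tau> = (1-\<tau>) x \<oplus> \<tau> y : the point of the geodesic from x to y at distance \<tau> d(x,y) from x.\<close>
definition geo :: "'a::metric_space \<Rightarrow> 'a \<Rightarrow> real \<Rightarrow> 'a" where
  "geo x y \<tau> = (THE z. \<exists>\<gamma>. is_geodesic \<gamma> x y \<and> z = \<gamma> \<tau>)"

definition p_uniformly_convex :: "'a::metric_space itself \<Rightarrow> real \<Rightarrow> real \<Rightarrow> bool" where
  "p_uniformly_convex _ p c \<longleftrightarrow>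
     (\<forall>x y z::'a. \<forall>\<tau>\<in>{0..1}.
        dist z (geo x y \<tau>) powr p \<le> (1 - \<tau>) * dist z x powr p + \<tau> * dist z y powr p
          - c / 2 * \<tau> * (1 - \<tau>) * dist x y powr p)"

definition geo_convex :: "('a::metric_space \<Rightarrow> real) \<Rightarrow> bool" where
  "geo_convex f \<longleftrightarrow> (\<forall>x y. \<forall>\<tau>\<in>{0..1}. f (geo x y \<tau>) \<le> (1 - \<tau>) * f x + \<tau> * f y)"

definition lsc :: "('a::topological_space \<Rightarrow> real) \<Rightarrow> bool" where
  "lsc f \<longleftrightarrow> (\<forall>t. closed {x. f x \<le> t})"

definition prox :: "real \<Rightarrow> ('a::metric_space \<Rightarrow> real) \<Rightarrow> real \<Rightarrow> 'a \<Rightarrow> 'a" where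
  "prox p f lam x = (THE y. \<forall>z. f y + 1 / (p * lam powr (p - 1)) * dist y x powr p
                             \<le> f z + 1 / (p * lam powr (p - 1)) * dist z x powr p)"

definition Delta :: "real \<Rightarrow> real \<Rightarrow> 'a::metric_space \<Rightarrow> 'a \<Rightarrow> 'a \<Rightarrow> 'a \<Rightarrow> real" where
  "Delta p c x y u v = c / 4 * (dist x v powr p + dist y u powr p - dist x u powr p - dist y v powr p)"

end

theory Submission
  imports Defs
begin

lemma attain_min:
  fixes F :: "'a::topological_space \<Rightarrow> real"
  assumes K: "compact K" "K \<noteq> {}" and cl: "\<And>t. closed {z. F z \<le> t}"
  shows "\<exists>z\<in>K. \<forall>w\<in>K. F z \<le> F w"
proof -
  have "K \<inter> (\<Inter>i\<in>K. {z. F z \<le> F i}) \<noteq> {}"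
  proof (rule compact_imp_fip_image[OF K(1)])
    show "closed {z. F z \<le> F i}" for i using cl .
  next
    fix I' assume I': "finite I'" "I' \<subseteq> K"
    show "K \<inter> (\<Inter>i\<in>I'. {z. F z \<le> F i}) \<noteq> {}"
    proof (cases "I' = {}")
      case True then show ?thesis using K(2) by auto
    next
      case False
      have "Min (F ` I') \<in> F ` I'" using I' False by auto
      then obtain i where i: "i \<in> I'" "F i = Min (F ` I')" by auto
      have "\<forall>j\<in>I'. F i \<le> F j" using i I' by auto
      then show ?thesis using i I' by auto
    qed
  qed
  then show ?thesis by auto
qed

lemma lsc_add_cont:
  fixes f \<phi> :: "'a::topological_space \<Rightarrow> real"
  assumes "lsc f" "continuous_on UNIV \<phi>"
  shows "closed {z. f z + \<phi> z \<le> t}"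
  unfolding closed_def
proof (subst open_subopen, intro ballI)
  fix z0 assume "z0 \<in> - {z. f z + \<phi> z \<le> t}"
  then have h: "f z0 + \<phi> z0 > t" by auto
  define e where "e = (f z0 + \<phi> z0 - t) / 2"
  have e: "e > 0" using h e_def by auto
  let ?T = "- {z. f z \<le> f z0 - e} \<inter> {z. \<phi> z0 - e < \<phi> z}"
  have "open (- {z. f z \<le> f z0 - e})" using assms(1) unfolding lsc_def by auto
  moreover have "open {z. \<phi> z0 - e < \<phi> z}"
    by (rule open_Collect_less) (auto intro: continuous_intros assms(2))
  ultimately have "open ?T" by auto
  moreover have "z0 \<in> ?T" using e by auto
  moreover have "?T \<subseteq> - {z. f z + \<phi> z \<le> t}" using e_def by auto
  ultimately show "\<exists>T. open T \<and> z0 \<in> T \<and> T \<subseteq> - {z. f z + \<phi> z \<le> t}" by blast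
qed

lemma geo_dist:
  fixes x z :: "'a::metric_space"
  assumes "uniquely_geodesic TYPE('a)" "t \<in> {0..1}"
  shows "dist x (geo x z t) = t * dist x z"
proof -
  obtain \<gamma> where g: "is_geodesic \<gamma> x z" and u: "\<forall>\<gamma>'. is_geodesic \<gamma>' x z \<longrightarrow> (\<forall>t\<in>{0..1}. \<gamma>' t = \<gamma> t)"
    using assms(1) unfolding uniquely_geodesic_def by meson
  have "geo x z t = \<gamma> t"
    unfolding geo_def
  proof (rule the_equality)
    show "\<exists>\<gamma>'. is_geodesic \<gamma>' x z \<and> \<gamma> t = \<gamma>' t" using g by blast
  next
    fix w assume "\<exists>\<gamma>'. is_geodesic \<gamma>' x z \<and> w = \<gamma>' t"
    then obtain \<gamma>' where "is_geodesic \<gamma>' x z" "w = \<gamma>' t" by blast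
    then show "w = \<gamma> t" using u assms(2) by metis
  qed
  moreover have "dist (\<gamma> 0) (\<gamma> t) = \<bar>0 - t\<bar> * dist x z"
  proof -
    have "\<forall>s\<in>{0..1}. \<forall>t\<in>{0..1}. dist (\<gamma> s) (\<gamma> t) = \<bar>s - t\<bar> * dist x z"
      using g unfolding is_geodesic_def by blast
    moreover have "(0::real) \<in> {0..1}" by simp
    ultimately show ?thesis using assms(2) by blast
  qed
  moreover have "\<gamma> 0 = x" using g unfolding is_geodesic_def by blast
  moreover have "\<bar>0 - t\<bar> = t" using assms(2) by simp
  ultimately show ?thesis by simp
qed

lemma limit_aux:
  fixes A B Q :: real
  assumes h: "\<And>t. 0 < t \<Longrightarrow> t \<le> 1 \<Longrightarrow> A \<le> B - Q * (1 - t)"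
  shows "A \<le> B - Q"
proof (rule ccontr)
  assume nc: "\<not> A \<le> B - Q"
  have AB: "A \<le> B" using h[of 1] by simp
  then have Q: "Q > 0" using nc by simp
  define t where "t = (A - B + Q) / (2 * Q)"
  have t0: "0 < t" using nc Q unfolding t_def by (simp add: field_simps)
  have t1: "t \<le> 1" using AB Q unfolding t_def by (simp add: field_simps)
  have "Q * t = (A - B + Q) / 2" using Q unfolding t_def by (simp add: field_simps)
  then show False using h[OF t0 t1] nc by (simp add: algebra_simps)
qed

theorem mainTheorem10:
  fixes f :: "'a::metric_space \<Rightarrow> real" and p c lam :: real and x xp :: 'a
  assumes "uniquely_geodesic TYPE('a)"
    and "boundedly_compact TYPE('a)"
    and "1 < p" and "0 < c"
    and "p_uniformly_convex TYPE('a) p c"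
    and "lsc f" and "geo_convex f"
    and "0 < lam"
  shows "xp = prox p f lam x \<longleftrightarrow>
    (\<forall>y. 4 / (c * p * lam powr (p - 1)) * Delta p c xp x xp y
          - (2 - c) / (2 * p * lam powr (p - 1)) * dist xp y powr p
        \<le> f y - f xp)"
proof -
  note ug = assms(1) and bc = assms(2) and p1 = assms(3) and c0 = assms(4)
    and uc = assms(5) and lscf = assms(6) and cvx = assms(7) and lam0 = assms(8)
  define L where "L = lam powr (p - 1)"
  have L: "L > 0" unfolding L_def using lam0 by simp
  define K where "K = 1 / (p * L)"
  have K: "K > 0" unfolding K_def using L p1 by simp
  define g where "g = (\<lambda>z. f z + K * dist z x powr p)"
  have prox_eq: "prox p f lam x = (THE y. \<forall>z. g y \<le> g z)"
    unfolding prox_def g_def K_def L_def by simp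
  have var: "g y0 + c / 2 * K * dist y0 y powr p \<le> g y" if mn: "\<forall>z. g y0 \<le> g z" for y0 y
  proof -
    define D where "D = dist y0 y powr p"
    have "g y0 \<le> g y - (c / 2 * K * D) * (1 - t)" if t: "0 < t" "t \<le> 1" for t
    proof -
      define w where "w = geo y0 y t"
      have tI: "t \<in> {0..1}" using t by simp
      have fw: "f w \<le> (1 - t) * f y0 + t * f y"
        using cvx tI unfolding geo_convex_def w_def by blast
      have dw: "dist x w powr p \<le> (1 - t) * dist x y0 powr p + t * dist x y powr p
          - c / 2 * t * (1 - t) * dist y0 y powr p"
        using uc tI unfolding p_uniformly_convex_def w_def by blast
      have "g y0 \<le> g w" using mn by blast
      also have "g w = f w + K * dist x w powr p" unfolding g_def by (simp add: dist_commute)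
      also have "\<dots> \<le> ((1 - t) * f y0 + t * f y) + K * ((1 - t) * dist x y0 powr p + t * dist x y powr p
          - c / 2 * t * (1 - t) * dist y0 y powr p)"
        using fw dw K by (intro add_mono mult_left_mono) auto
      also have "\<dots> = (1 - t) * g y0 + t * (g y - (c / 2 * K * D) * (1 - t))"
        unfolding g_def D_def by (simp add: dist_commute algebra_simps)
      finally have "t * g y0 \<le> t * (g y - (c / 2 * K * D) * (1 - t))"
        by (simp add: algebra_simps)
      then show ?thesis using t by simp
    qed
    then have "g y0 \<le> g y - (c / 2 * K * D)" by (rule limit_aux)
    then show ?thesis unfolding D_def by simp
  qed
  have uniq: "y = z" if "\<forall>w. g y \<le> g w" "\<forall>w. g z \<le> g w" for y z
  proof -
    have "g y + c / 2 * K * dist y z powr p \<le> g z" using var that(1) by blast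
    moreover have "g z \<le> g y" using that(2) by blast
    ultimately have "c / 2 * K * dist y z powr p \<le> 0" by simp
    moreover have "c / 2 * K > 0" using c0 K by simp
    ultimately have "dist y z powr p \<le> 0"
      by (metis mult_pos_pos not_less powr_gt_zero powr_zero_eq_one zero_less_one)
    then have "\<not> (0 < dist y z powr p)" by simp
    then show ?thesis by simp
  qed
  have exist: "\<exists>z. \<forall>w. g z \<le> g w"
  proof -
    have cb: "compact (cball x 1)" using bc unfolding boundedly_compact_def by auto
    have clf: "closed {z. f z \<le> t}" for t using lscf unfolding lsc_def by blast
    obtain m0 where m0: "m0 \<in> cball x 1" "\<forall>w\<in>cball x 1. f m0 \<le> f w"
      using attain_min[OF cb _ clf] by fastforce
    define M where "M = max 0 (f x - f m0)"
    have M: "M \<ge> 0" "f x - f m0 \<le> M" unfolding M_def by auto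
    have bound: "f x - dist x z * M \<le> f z" if R1: "dist x z > 1" for z
    proof -
      define R where "R = dist x z"
      have R: "R > 1" using R1 R_def by simp
      define t where "t = 1 / R"
      have tI: "t \<in> {0..1}" using R unfolding t_def by simp
      define w where "w = geo x z t"
      have "dist x w = t * R" unfolding w_def R_def using geo_dist[OF ug tI] by simp
      then have "dist x w = 1" using R unfolding t_def by simp
      then have "f m0 \<le> f w" using m0 by simp
      also have "f w \<le> (1 - t) * f x + t * f z"
        using cvx tI unfolding geo_convex_def w_def by blast
      finally have "R * f m0 \<le> R * ((1 - t) * f x + t * f z)" using R by simp
      also have "\<dots> = (R - 1) * f x + f z" using R unfolding t_def by (simp add: field_simps)
      finally have "f x - R * (f x - f m0) \<le> f z" by (simp add: algebra_simps)
      moreover have "R * (f x - f m0) \<le> R * M" using M R by (intro mult_left_mono) auto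
      ultimately show ?thesis unfolding R_def by linarith
    qed
    define R0' where "R0' = (p * L * M + 1) powr (1 / (p - 1))"
    define R0 where "R0 = max 1 R0'"
    have big: "g x < g z" if zR: "dist x z > R0" for z
    proof -
      define R where "R = dist x z"
      have R: "R > 1" "R > R0'" using zR unfolding R_def R0_def by auto
      have "R0' powr (p - 1) = p * L * M + 1"
        unfolding R0'_def powr_powr using p1 L M by simp
      moreover have "R0' powr (p - 1) \<le> R powr (p - 1)"
        using R p1 unfolding R0'_def by (intro powr_mono2) auto
      ultimately have Rp: "p * L * M + 1 \<le> R powr (p - 1)" by simp
      have "R powr p = R * R powr (p - 1)" using R powr_mult_base[of R "p - 1"] by simp
      then have "K * R powr p = R * R powr (p - 1) / (p * L)" unfolding K_def by simp
      also have "\<dots> \<ge> R * (p * L * M + 1) / (p * L)"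
        using Rp R L p1 by (intro divide_right_mono mult_left_mono) auto
      finally have "R * (p * L * M + 1) / (p * L) \<le> K * R powr p" .
      moreover have "R * (p * L * M + 1) / (p * L) = R * M + R / (p * L)"
        using L p1 by (simp add: field_simps)
      moreover have "R / (p * L) > 0" using R L p1 by simp
      ultimately have "R * M < K * R powr p" by linarith
      moreover have "f x - R * M \<le> f z" using bound R unfolding R_def by simp
      moreover have "g z = f z + K * R powr p" unfolding g_def R_def by (simp add: dist_commute)
      moreover have "g x = f x" unfolding g_def using p1 by simp
      ultimately show ?thesis by linarith
    qed
    define S where "S = {z. g z \<le> g x}"
    have cont: "continuous_on UNIV (\<lambda>z. K * dist z x powr p)"
      using p1 by (intro continuous_intros continuous_on_powr') auto
    have "closed S" unfolding S_def g_def by (rule lsc_add_cont[OF lscf cont])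
    moreover have "S \<subseteq> cball x R0" using big unfolding S_def by (force simp: not_less)
    ultimately have cS: "compact S" using bc bounded_cball bounded_subset
      unfolding boundedly_compact_def by blast
    have xS: "x \<in> S" unfolding S_def by simp
    have clg: "closed {z. g z \<le> t}" for t unfolding g_def by (rule lsc_add_cont[OF lscf cont])
    obtain z0 where z0: "z0 \<in> S" "\<forall>w\<in>S. g z0 \<le> g w"
      using attain_min[OF cS _ clg] xS by blast
    have "g z0 \<le> g w" for w
    proof (cases "w \<in> S")
      case True then show ?thesis using z0 by blast
    next
      case False
      then have "g w > g x" unfolding S_def by simp
      moreover have "g z0 \<le> g x" using z0 xS by blast
      ultimately show ?thesis by simp
    qed
    then show ?thesis by blast
  qed
  have equiv: "(4 / (c * p * lam powr (p - 1)) * Delta p c xp x xp y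
          - (2 - c) / (2 * p * lam powr (p - 1)) * dist xp y powr p \<le> f y - f xp)
       \<longleftrightarrow> g xp + c / 2 * K * dist xp y powr p \<le> g y" for y
  proof -
    define a where "a = dist xp y powr p"
    define b where "b = dist xp x powr p"
    define e where "e = dist y x powr p"
    have D: "Delta p c xp x xp y = c / 4 * (a + b - 0 - e)"
      unfolding Delta_def a_def b_def e_def using p1 by (simp add: dist_commute)
    have id: "4 / (c * p * L) * (c / 4 * (a + b - 0 - e)) - (2 - c) / (2 * p * L) * a
        = K * (c / 2 * a + b - e)"
      using c0 L p1 unfolding K_def by (simp add: field_simps)
    have lhs: "4 / (c * p * lam powr (p - 1)) * Delta p c xp x xp y
          - (2 - c) / (2 * p * lam powr (p - 1)) * dist xp y powr p = K * (c / 2 * a + b - e)"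
      using id unfolding D L_def a_def by simp
    have rhs: "(g xp + c / 2 * K * dist xp y powr p \<le> g y) \<longleftrightarrow> K * (c / 2 * a + b - e) \<le> f y - f xp"
      unfolding g_def a_def b_def e_def by (simp add: algebra_simps)
    show ?thesis unfolding lhs rhs ..
  qed
  show ?thesis
  proof
    assume xpe: "xp = prox p f lam x"
    obtain z0 where z0: "\<forall>w. g z0 \<le> g w" using exist by blast
    have "prox p f lam x = z0" unfolding prox_eq
      using z0 uniq by (intro the_equality) auto
    then have "\<forall>w. g xp \<le> g w" using xpe z0 by simp
    then show "\<forall>y. 4 / (c * p * lam powr (p - 1)) * Delta p c xp x xp y
          - (2 - c) / (2 * p * lam powr (p - 1)) * dist xp y powr p \<le> f y - f xp"
      using equiv var by blast
  next
    assume h: "\<forall>y. 4 / (c * p * lam powr (p - 1)) * Delta p c xp x xp y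
          - (2 - c) / (2 * p * lam powr (p - 1)) * dist xp y powr p \<le> f y - f xp"
    have "g xp \<le> g w" for w
    proof -
      have "g xp + c / 2 * K * dist xp w powr p \<le> g w" using h equiv by blast
      moreover have "0 \<le> c / 2 * K * dist xp w powr p" using c0 K by simp
      ultimately show ?thesis by linarith
    qed
    then have "\<forall>w. g xp \<le> g w" by blast
    then show "xp = prox p f lam x" unfolding prox_eq
      using uniq by (intro the_equality[symmetric]) auto
  qed
qed

end
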